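(* Let $f:\{0,1\}^r\to\{0,1\}$ satisfy $f(0,\dots,0)=1$. If $f$ contains $\mathrm{IMPL}$ as a restriction, then $f$ contains $\mathrm{IMPL}$ as a $0$-restriction.
   Context: $g:\{0,1\}^s\to\{0,1\}$ is a restriction of $f$ if there are pairwise disjoint, possibly empty, sets $X_1,\dots,X_s,Z_0,Z_1$ with union $[r]$ such that $g(x_1,\dots,x_s)=f(u)$. Here $u_i=x_j$ for $i\in X_j$, $u_i=0$ for $i\in Z_0$, and $u_i=1$ for $i\in Z_1$. It is a $0$-restriction if this holds with $Z_1=\emptyset$. $\mathrm{IMPL}(y_1,y_2)=\overline{y_1}\vee y_2$. *)

theory Defs
  imports Main
begin

text \<open>Boolean functions {0,1}^r -> {0,1} are modelled as functions on bool lists;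
  only lists of length r are meaningful. 0 = False, 1 = True.
  Coordinates are indexed 0..r-1 (i.e. [r] = {0..<r}).\<close>

definition restr_witness ::
  "nat \<Rightarrow> (bool list \<Rightarrow> bool) \<Rightarrow> nat \<Rightarrow> (bool list \<Rightarrow> bool)
   \<Rightarrow> (nat \<Rightarrow> nat set) \<Rightarrow> nat set \<Rightarrow> nat set \<Rightarrow> bool" where
  "restr_witness r f s g X Z0 Z1 \<longleftrightarrow>
     (\<forall>j<s. \<forall>k<s. j \<noteq> k \<longrightarrow> X j \<inter> X k = {}) \<and>
     (\<forall>j<s. X j \<inter> Z0 = {} \<and> X j \<inter> Z1 = {}) \<and>
     Z0 \<inter> Z1 = {} \<and>
     (\<Union>j<s. X j) \<union> Z0 \<union> Z1 = {0..<r} \<and>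
     (\<forall>x u. length x = s \<longrightarrow> length u = r \<longrightarrow>
        (\<forall>j<s. \<forall>i\<in>X j. u ! i = x ! j) \<longrightarrow>
        (\<forall>i\<in>Z0. \<not> u ! i) \<longrightarrow> (\<forall>i\<in>Z1. u ! i) \<longrightarrow>
        g x = f u)"

definition is_restriction ::
  "nat \<Rightarrow> (bool list \<Rightarrow> bool) \<Rightarrow> nat \<Rightarrow> (bool list \<Rightarrow> bool) \<Rightarrow> bool" where
  "is_restriction r f s g \<longleftrightarrow> (\<exists>X Z0 Z1. restr_witness r f s g X Z0 Z1)"

definition is_0_restriction ::
  "nat \<Rightarrow> (bool list \<Rightarrow> bool) \<Rightarrow> nat \<Rightarrow> (bool list \<Rightarrow> bool) \<Rightarrow> bool" where
  "is_0_restriction r f s g \<longleftrightarrow> (\<exists>X Z0. restr_witness r f s g X Z0 {})"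

definition IMPL :: "bool list \<Rightarrow> bool" where
  "IMPL y = (\<not> y ! 0 \<or> y ! 1)"

end

theory Submission
  imports Defs
begin

lemma list_eq_map:
  assumes "length u = r" "\<And>i. i < r \<Longrightarrow> u ! i = e i"
  shows "u = map e [0..<r]"
  using assms by (intro nth_equalityI) auto

lemma mk0:
  assumes d: "Y0 \<inter> Y1 = {}" "Y0 \<inter> W = {}" "Y1 \<inter> W = {}"
    and c: "Y0 \<union> Y1 \<union> W = {0..<r}"
    and h: "\<And>a b. IMPL [a,b] = f (map (\<lambda>i. if i \<in> Y0 then a else if i \<in> Y1 then b else False) [0..<r])"
  shows "is_0_restriction r f 2 IMPL"
  unfolding is_0_restriction_def
proof (intro exI)
  let ?X = "\<lambda>j::nat. if j = 0 then Y0 else Y1"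
  have cov: "(\<Union>j<2. ?X j) = Y0 \<union> Y1"
    by (auto simp: lessThan_Suc numeral_2_eq_2)
  show "restr_witness r f 2 IMPL ?X W {}"
    unfolding restr_witness_def
  proof (intro conjI allI impI)
    fix j k :: nat assume "j < 2" "k < 2" "j \<noteq> k"
    then have "(j = 0 \<and> k = 1) \<or> (j = 1 \<and> k = 0)" by linarith
    then show "?X j \<inter> ?X k = {}" using d by auto
  next
    fix j :: nat assume "j < 2" then show "?X j \<inter> W = {}" using d by simp
  next
    fix j :: nat assume "j < 2" then show "?X j \<inter> {} = {}" by auto
  next
    show "W \<inter> {} = {}" by simp
  next
    show "(\<Union>j<2. ?X j) \<union> W \<union> {} = {0..<r}" using cov c by auto
  next
    fix x u :: "bool list"
    assume lx: "length x = 2" and lu: "length u = r"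
      and hx: "\<forall>j<2. \<forall>i\<in>?X j. u ! i = x ! j" and hz: "\<forall>i\<in>W. \<not> u ! i"
    have x: "x = [x!0, x!1]" using lx
      by (intro nth_equalityI) (auto simp: less_2_cases_iff)
    have "u = map (\<lambda>i. if i \<in> Y0 then x!0 else if i \<in> Y1 then x!1 else False) [0..<r]"
    proof (rule list_eq_map[OF lu])
      fix i assume "i < r"
      then have "i \<in> Y0 \<union> Y1 \<union> W" using c by auto
      then show "u ! i = (if i \<in> Y0 then x!0 else if i \<in> Y1 then x!1 else False)"
      proof -
        have a0: "\<forall>i\<in>Y0. u ! i = x ! 0" using hx by simp
        have a1: "\<forall>i\<in>Y1. u ! i = x ! 1" using hx[rule_format, of 1] by simp
        show ?thesis using a0 a1 hz \<open>i \<in> Y0 \<union> Y1 \<union> W\<close> d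
          by (cases "i \<in> Y0"; cases "i \<in> Y1") auto
      qed
    qed
    then show "IMPL x = f u" using h[of "x!0" "x!1"] x by simp
  qed
qed

theorem mainTheorem13:
  fixes r :: nat and f :: "bool list \<Rightarrow> bool"
  assumes "f (replicate r False)"
    and "is_restriction r f 2 IMPL"
  shows "is_0_restriction r f 2 IMPL"
proof -
  obtain X Z0 Z1 where w: "restr_witness r f 2 IMPL X Z0 Z1"
    using assms(2) unfolding is_restriction_def by blast
  have P1: "\<forall>j<2. \<forall>k<2. j \<noteq> k \<longrightarrow> X j \<inter> X k = {}"
    and P2: "\<forall>j<2. X j \<inter> Z0 = {} \<and> X j \<inter> Z1 = {}"
    and dzz: "Z0 \<inter> Z1 = {}"
    and P4: "(\<Union>j<2. X j) \<union> Z0 \<union> Z1 = {0..<r}"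
    and wf: "\<And>x u. length x = 2 \<Longrightarrow> length u = r \<Longrightarrow>
        (\<forall>j<2. \<forall>i\<in>X j. u ! i = x ! j) \<Longrightarrow>
        (\<forall>i\<in>Z0. \<not> u ! i) \<Longrightarrow> (\<forall>i\<in>Z1. u ! i) \<Longrightarrow> IMPL x = f u"
    using w unfolding restr_witness_def by blast+
  have d01: "X 0 \<inter> X 1 = {}" using P1[rule_format, of 0 1] by simp
  have dz: "X 0 \<inter> Z0 = {}" "X 0 \<inter> Z1 = {}" "X 1 \<inter> Z0 = {}" "X 1 \<inter> Z1 = {}"
    using P2[rule_format, of 0] P2[rule_format, of 1] by simp_all
  have cov2: "(\<Union>j<2. X j) = X 0 \<union> X 1"
    by (auto simp: lessThan_Suc numeral_2_eq_2)
  have cov: "X 0 \<union> X 1 \<union> Z0 \<union> Z1 = {0..<r}"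
    using P4 cov2 by simp
  have inr: "i < r" if "i \<in> X 0 \<union> X 1 \<union> Z0 \<union> Z1" for i
  proof -
    have "i \<in> {0..<r}" using that unfolding cov[symmetric] .
    then show ?thesis by simp
  qed
  define e where "e a b c = (\<lambda>i. if i \<in> X 0 then a else if i \<in> X 1 then b else if i \<in> Z1 then c else False)" for a b c
  define h where "h a b c = f (map (e a b c) [0..<r])" for a b c
  have h1: "h a b True = IMPL [a,b]" for a b
  proof -
    have "IMPL [a,b] = f (map (e a b True) [0..<r])"
    proof (rule wf)
      show "\<forall>j<2. \<forall>i\<in>X j. map (e a b True) [0..<r] ! i = [a, b] ! j"
      proof (intro allI impI ballI)
        fix j i assume j2: "j < 2" and iX: "i \<in> X j"
        have j01: "j = 0 \<or> j = 1" using j2 by linarith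
        then have "i \<in> X 0 \<union> X 1" using iX by blast
        then have ir: "i < r" using inr by blast
        then have m: "map (e a b True) [0..<r] ! i = e a b True i" by simp
        show "map (e a b True) [0..<r] ! i = [a, b] ! j"
          using j01
        proof
          assume "j = 0" then show ?thesis using m iX by (simp add: e_def)
        next
          assume j1: "j = 1" then have "i \<notin> X 0" using iX d01 by blast
          then show ?thesis using m iX j1 by (simp add: e_def)
        qed
      qed
      show "\<forall>i\<in>Z0. \<not> map (e a b True) [0..<r] ! i"
      proof
        fix i assume "i \<in> Z0"
        moreover have "i < r" using inr \<open>i \<in> Z0\<close> by blast
        moreover have "i \<notin> X 0" "i \<notin> X 1" "i \<notin> Z1" using \<open>i \<in> Z0\<close> dz dzz by blast+
        ultimately show "\<not> map (e a b True) [0..<r] ! i" by (simp add: e_def)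
      qed
      show "\<forall>i\<in>Z1. map (e a b True) [0..<r] ! i"
      proof
        fix i assume "i \<in> Z1"
        moreover have "i < r" using inr \<open>i \<in> Z1\<close> by blast
        moreover have "i \<notin> X 0" "i \<notin> X 1" using \<open>i \<in> Z1\<close> dz by blast+
        ultimately show "map (e a b True) [0..<r] ! i" by (simp add: e_def)
      qed
    qed auto
    then show ?thesis by (simp add: h_def)
  qed
  have h0: "h False False False"
  proof -
    have "map (e False False False) [0..<r] = replicate r False"
      by (intro nth_equalityI) (auto simp: e_def)
    then show ?thesis using assms(1) by (simp add: h_def)
  qed
  show ?thesis
  proof (cases "h True False False")
    case False
    show ?thesis
    proof (rule mk0[of "X 0" "X 1 \<union> Z1" Z0])
      fix a b
      have "map (\<lambda>i. if i \<in> X 0 then a else if i \<in> X 1 \<union> Z1 then b else False) [0..<r]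
          = map (e a b b) [0..<r]" by (auto simp: e_def)
      moreover have "IMPL [a,b] = h a b b"
        using h1 h0 False by (cases a; cases b) (auto simp: IMPL_def)
      ultimately show "IMPL [a,b] = f (map (\<lambda>i. if i \<in> X 0 then a else if i \<in> X 1 \<union> Z1 then b else False) [0..<r])"
        by (simp only: h_def)
    qed (use d01 dz dzz in blast, use d01 dz dzz in blast, use d01 dz dzz in blast, simp add: cov[symmetric] Un_ac)
  next
    case T: True
    show ?thesis
    proof (cases "h False True False")
      case True
      show ?thesis
      proof (rule mk0[of "X 0 \<union> Z1" "X 1" Z0])
        fix a b
        have "map (\<lambda>i. if i \<in> X 0 \<union> Z1 then a else if i \<in> X 1 then b else False) [0..<r]
            = map (e a b a) [0..<r]" using dz by (auto simp: e_def)
        moreover have "IMPL [a,b] = h a b a"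
          using h1 h0 True by (cases a; cases b) (auto simp: IMPL_def)
        ultimately show "IMPL [a,b] = f (map (\<lambda>i. if i \<in> X 0 \<union> Z1 then a else if i \<in> X 1 then b else False) [0..<r])"
          by (simp only: h_def)
      qed (use d01 dz dzz in blast, use d01 dz dzz in blast, use d01 dz dzz in blast, simp add: cov[symmetric] Un_ac)
    next
      case False
      show ?thesis
      proof (rule mk0[of "X 1" Z1 "Z0 \<union> X 0"])
        fix a b
        have "map (\<lambda>i. if i \<in> X 1 then a else if i \<in> Z1 then b else False) [0..<r]
            = map (e False a b) [0..<r]" using dz d01 by (auto simp: e_def)
        moreover have "IMPL [a,b] = h False a b"
          using h1 h0 False by (cases a; cases b) (auto simp: IMPL_def)
        ultimately show "IMPL [a,b] = f (map (\<lambda>i. if i \<in> X 1 then a else if i \<in> Z1 then b else False) [0..<r])"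
          by (simp only: h_def)
      qed (use d01 dz dzz in blast, use d01 dz dzz in blast, use d01 dz dzz in blast, simp add: cov[symmetric] Un_ac)
    qed
  qed
qed

end
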